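(* Fix $L>0$. For parameters $a,b$ call a barrier a pair $(\phi,\psi)$ solving $$-\phi''=\phi(1-\phi-a\psi),\quad -\psi''=\psi(1-b\phi-\psi)\ \text{ in }(0,L),\qquad \phi(0)=\phi(L)=0,\ \psi(0)=\psi(L)=1,$$ with $0<\phi(x)<1$ and $0<\psi(x)<1$ for all $x\in(0,L)$. Let $(a_n,b_n)_{n\in\mathbb{N}}$ be a sequence with $a_n>0$ and $b_n>\max\{a_n,1\}$ for all $n$, such that a barrier exists for the parameters $a_n,b_n$ for every $n$. Suppose $(a_n,b_n)\to(a,b)$ where $a>0$, $b>\max\{a,1\}$ and $a>1$. Then a barrier exists for the parameters $a,b$. *)

theory Defs
  imports "HOL-Analysis.Analysis"
begin

definition barrier :: "real \<Rightarrow> real \<Rightarrow> real \<Rightarrow> (real \<Rightarrow> real) \<Rightarrow> (real \<Rightarrow> real) \<Rightarrow> bool" where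
  "barrier L a b \<phi> \<psi> \<longleftrightarrow>
     continuous_on {0..L} \<phi> \<and> continuous_on {0..L} \<psi> \<and>
     (\<exists>\<phi>' \<phi>'' \<psi>' \<psi>''. \<forall>x\<in>{0<..<L}.
        (\<phi> has_real_derivative \<phi>' x) (at x) \<and> (\<phi>' has_real_derivative \<phi>'' x) (at x) \<and>
        (\<psi> has_real_derivative \<psi>' x) (at x) \<and> (\<psi>' has_real_derivative \<psi>'' x) (at x) \<and>
        - \<phi>'' x = \<phi> x * (1 - \<phi> x - a * \<psi> x) \<and>
        - \<psi>'' x = \<psi> x * (1 - b * \<phi> x - \<psi> x)) \<and>
     \<phi> 0 = 0 \<and> \<phi> L = 0 \<and> \<psi> 0 = 1 \<and> \<psi> L = 1 \<and>
     (\<forall>x\<in>{0<..<L}. 0 < \<phi> x \<and> \<phi> x < 1 \<and> 0 < \<psi> x \<and> \<psi> x < 1)"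

end

theory Submission
  imports Defs "HOL-Complex_Analysis.Great_Picard"
begin


lemma maxp:
  fixes f f1 :: "real \<Rightarrow> real" and c d x f2x :: real
  assumes x: "c < x" "x < d"
    and D1: "\<And>y. c < y \<Longrightarrow> y < d \<Longrightarrow> (f has_real_derivative f1 y) (at y)"
    and D2: "(f1 has_real_derivative f2x) (at x)"
    and mx: "\<And>y. c < y \<Longrightarrow> y < d \<Longrightarrow> f y \<le> f x"
  shows "f2x \<le> 0"
proof (rule ccontr)
  assume "\<not> f2x \<le> 0"
  hence pos: "f2x > 0" by simp
  have "f1 x = 0"
  proof (rule DERIV_local_max[OF D1[OF x]])
    show "0 < min (x - c) (d - x)" using x by simp
    show "\<forall>y. \<bar>x - y\<bar> < min (x - c) (d - x) \<longrightarrow> f y \<le> f x"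
      using mx by (auto simp: abs_if split: if_splits)
  qed
  obtain e where e: "e > 0" "\<And>h. h > 0 \<Longrightarrow> h < e \<Longrightarrow> f1 x < f1 (x + h)"
    using DERIV_pos_inc_right[OF D2 pos] by blast
  define y where "y = x + min e (d - x) / 2"
  have xy: "x < y" "y < d" "y - x < e" using e(1) x by (auto simp: y_def min_def field_simps)
  obtain z where z: "x < z" "z < y" "f y - f x = (y - x) * f1 z"
    using MVT2[OF xy(1), of f f1] D1 x xy by force
  have "f1 z > 0" using e(2)[of "z - x"] z xy \<open>f1 x = 0\<close> by simp
  moreover have "(y - x) * f1 z > 0" using calculation xy by simp
  ultimately have "f y > f x" using z by linarith
  thus False using mx[of y] xy x by simp
qed

lemma minp:
  fixes f f1 :: "real \<Rightarrow> real" and c d x f2x :: real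
  assumes x: "c < x" "x < d"
    and D1: "\<And>y. c < y \<Longrightarrow> y < d \<Longrightarrow> (f has_real_derivative f1 y) (at y)"
    and D2: "(f1 has_real_derivative f2x) (at x)"
    and mn: "\<And>y. c < y \<Longrightarrow> y < d \<Longrightarrow> f x \<le> f y"
  shows "f2x \<ge> 0"
proof -
  have "- f2x \<le> 0"
  proof (rule maxp[of c x d "\<lambda>y. - f y" "\<lambda>y. - f1 y"])
    show "((\<lambda>y. - f1 y) has_real_derivative - f2x) (at x)" using D2 by (intro derivative_intros)
  qed (use x D1 mn in \<open>auto intro!: derivative_intros\<close>)
  thus ?thesis by simp
qed



lemma gron_aux:
  fixes f f1 f2 :: "real \<Rightarrow> real"
  assumes D: "\<And>y. c < y \<Longrightarrow> y < d \<Longrightarrow> (f has_real_derivative f1 y) (at y) \<and> (f1 has_real_derivative f2 y) (at y)"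
    and B: "\<And>y. c < y \<Longrightarrow> y < d \<Longrightarrow> \<bar>f2 y\<bar> \<le> K * \<bar>f y\<bar>"
    and K: "K \<ge> 0"
    and y: "c < y" "y < d"
  shows "((\<lambda>t. (f t)\<^sup>2 + (f1 t)\<^sup>2) has_real_derivative (2 * f y * f1 y + 2 * f1 y * f2 y)) (at y)"
    and "\<bar>2 * f y * f1 y + 2 * f1 y * f2 y\<bar> \<le> (1 + K) * ((f y)\<^sup>2 + (f1 y)\<^sup>2)"
proof -
  show "((\<lambda>t. (f t)\<^sup>2 + (f1 t)\<^sup>2) has_real_derivative (2 * f y * f1 y + 2 * f1 y * f2 y)) (at y)"
    using D[OF y] by (auto intro!: derivative_eq_intros)
  have a: "\<bar>2 * f y * f1 y\<bar> \<le> (f y)\<^sup>2 + (f1 y)\<^sup>2"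
    using sum_squares_bound[of "f y" "f1 y"] sum_squares_bound[of "f y" "- f1 y"] by (simp add: abs_if)
  have "\<bar>2 * f1 y * f2 y\<bar> = 2 * \<bar>f1 y\<bar> * \<bar>f2 y\<bar>" by (simp add: abs_mult)
  also have "\<dots> \<le> 2 * \<bar>f1 y\<bar> * (K * \<bar>f y\<bar>)" using B[OF y] by (simp add: mult_left_mono)
  also have "\<dots> = K * \<bar>2 * f y * f1 y\<bar>" by (simp add: abs_mult)
  also have "\<dots> \<le> K * ((f y)\<^sup>2 + (f1 y)\<^sup>2)" using a K by (simp add: mult_left_mono)
  finally show "\<bar>2 * f y * f1 y + 2 * f1 y * f2 y\<bar> \<le> (1 + K) * ((f y)\<^sup>2 + (f1 y)\<^sup>2)"
    using a by (simp add: algebra_simps)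
qed

lemma gron:
  fixes f f1 f2 :: "real \<Rightarrow> real"
  assumes D: "\<And>y. c < y \<Longrightarrow> y < d \<Longrightarrow> (f has_real_derivative f1 y) (at y) \<and> (f1 has_real_derivative f2 y) (at y)"
    and B: "\<And>y. c < y \<Longrightarrow> y < d \<Longrightarrow> \<bar>f2 y\<bar> \<le> K * \<bar>f y\<bar>"
    and K: "K \<ge> 0"
    and x: "c < x" "x < d" and z: "f x = 0" "f1 x = 0"
    and y: "c < y" "y < d"
  shows "f y = 0"
proof -
  define E where "E t = (f t)\<^sup>2 + (f1 t)\<^sup>2" for t
  define C where "C = 1 + K"
  have dE: "(E has_real_derivative (2 * f t * f1 t + 2 * f1 t * f2 t)) (at t)"
    and bE: "\<bar>2 * f t * f1 t + 2 * f1 t * f2 t\<bar> \<le> C * E t" if "c < t" "t < d" for t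
    using gron_aux[OF D B K that] unfolding E_def C_def by auto
  have E0: "E x = 0" using z by (simp add: E_def)
  have Enn: "E t \<ge> 0" for t by (simp add: E_def)
  have "E y \<le> 0"
  proof (cases "x \<le> y")
    case True
    have "(\<lambda>t. E t * exp (- C * t)) y \<le> (\<lambda>t. E t * exp (- C * t)) x"
    proof (rule DERIV_nonpos_imp_nonincreasing[OF True])
      fix t assume t: "x \<le> t" "t \<le> y"
      hence ct: "c < t" "t < d" using x y by auto
      show "\<exists>l. ((\<lambda>t. E t * exp (- C * t)) has_real_derivative l) (at t) \<and> l \<le> 0"
      proof (intro exI conjI)
        show "((\<lambda>t. E t * exp (- C * t)) has_real_derivative
           ((2 * f t * f1 t + 2 * f1 t * f2 t) - C * E t) * exp (- C * t)) (at t)"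
          using dE[OF ct] by (auto intro!: derivative_eq_intros simp: algebra_simps)
        have "(2 * f t * f1 t + 2 * f1 t * f2 t) - C * E t \<le> 0" using bE[OF ct] by linarith
        thus "((2 * f t * f1 t + 2 * f1 t * f2 t) - C * E t) * exp (- C * t) \<le> 0"
          by (simp add: mult_nonpos_nonneg)
      qed
    qed
    hence "E y * exp (- C * y) \<le> 0" using E0 by simp
    thus ?thesis by (simp add: mult_le_0_iff)
  next
    case False
    hence yx: "y \<le> x" by simp
    have "(\<lambda>t. E t * exp (C * t)) y \<le> (\<lambda>t. E t * exp (C * t)) x"
    proof (rule DERIV_nonneg_imp_nondecreasing[OF yx])
      fix t assume t: "y \<le> t" "t \<le> x"
      hence ct: "c < t" "t < d" using x y by auto
      show "\<exists>l. ((\<lambda>t. E t * exp (C * t)) has_real_derivative l) (at t) \<and> 0 \<le> l"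
      proof (intro exI conjI)
        show "((\<lambda>t. E t * exp (C * t)) has_real_derivative
           ((2 * f t * f1 t + 2 * f1 t * f2 t) + C * E t) * exp (C * t)) (at t)"
          using dE[OF ct] by (auto intro!: derivative_eq_intros simp: algebra_simps)
        have "(2 * f t * f1 t + 2 * f1 t * f2 t) + C * E t \<ge> 0" using bE[OF ct] by linarith
        thus "0 \<le> ((2 * f t * f1 t + 2 * f1 t * f2 t) + C * E t) * exp (C * t)"
          by simp
      qed
    qed
    hence "E y * exp (C * y) \<le> 0" using E0 by simp
    thus ?thesis by (simp add: mult_le_0_iff)
  qed
  hence "E y = 0" using Enn[of y] by linarith
  thus ?thesis by (simp add: E_def add_nonneg_eq_0_iff)
qed



lemma unif_nle:
  fixes f2 :: "nat \<Rightarrow> real \<Rightarrow> real"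
  assumes U: "uniform_limit S f2 G sequentially"
  shows "\<And>e. e > 0 \<Longrightarrow> \<forall>\<^sub>F n in sequentially. \<forall>x\<in>S. \<forall>h. norm (f2 n x * h - G x * h) \<le> e * norm h"
proof -
  fix e :: real assume e: "e > 0"
  obtain N where N: "\<forall>n\<ge>N. \<forall>x\<in>S. dist (f2 n x) (G x) < e"
    using U e unfolding uniform_limit_sequentially_iff by blast
  show "\<forall>\<^sub>F n in sequentially. \<forall>x\<in>S. \<forall>h. norm (f2 n x * h - G x * h) \<le> e * norm h"
    unfolding eventually_sequentially
  proof (intro exI allI impI ballI)
    fix n x h assume "N \<le> n" "x \<in> S"
    hence "\<bar>f2 n x - G x\<bar> \<le> e" using N by (force simp: dist_real_def)
    hence "\<bar>f2 n x - G x\<bar> * \<bar>h\<bar> \<le> e * \<bar>h\<bar>" by (simp add: mult_right_mono)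
    thus "norm (f2 n x * h - G x * h) \<le> e * norm h" by (simp add: left_diff_distrib[symmetric] abs_mult)
  qed
qed

lemma conv:
  fixes f f1 f2 :: "nat \<Rightarrow> real \<Rightarrow> real" and F G :: "real \<Rightarrow> real"
  assumes S: "S = {c<..<d}" and x0: "x0 \<in> S"
    and D: "\<And>n x. x \<in> S \<Longrightarrow> (f n has_real_derivative f1 n x) (at x) \<and> (f1 n has_real_derivative f2 n x) (at x)"
    and U: "uniform_limit S f2 G sequentially"
    and P: "(\<lambda>n. f1 n x0) \<longlonglongrightarrow> p"
    and Fl: "\<And>x. x \<in> S \<Longrightarrow> (\<lambda>n. f n x) \<longlonglongrightarrow> F x"
  shows "\<exists>F1. \<forall>x\<in>S. (F has_real_derivative F1 x) (at x) \<and> (F1 has_real_derivative G x) (at x)"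
proof -
  have cS: "convex S" "open S" using S by auto
  have cd: "c < d" using x0 S by auto
  have derf1: "(f1 n has_derivative (*) (f2 n x)) (at x within S)" if "x \<in> S" for n x
    using D[OF that] unfolding has_field_derivative_def by (blast intro: has_derivative_at_withinI)
  obtain g1 where g1: "\<forall>x\<in>S. (\<lambda>n. f1 n x) \<longlonglongrightarrow> g1 x \<and> (g1 has_derivative (*) (G x)) (at x within S)"
    using has_derivative_sequence[OF cS(1) derf1 unif_nle[OF U] x0 P] by blast
  have UC: "uniformly_Cauchy_on S f1"
    unfolding uniformly_Cauchy_on_def
  proof (intro allI impI)
    fix e :: real assume e: "e > 0"
    define e' where "e' = e / (2 * (d - c + 1))"
    have e': "e' > 0" using e cd by (simp add: e'_def)
    obtain N1 where N1: "\<forall>m\<ge>N1. \<forall>n\<ge>N1. \<forall>x\<in>S. \<forall>y\<in>S. norm ((f1 m x - f1 n x) - (f1 m y - f1 n y)) \<le> e' * norm (x - y)"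
      using has_derivative_sequence_Lipschitz[OF cS(1) derf1 unif_nle[OF U] e'] by blast
    have "Cauchy (\<lambda>n. f1 n x0)" using P by (rule LIMSEQ_imp_Cauchy)
    then obtain N2 where N2: "\<forall>m\<ge>N2. \<forall>n\<ge>N2. dist (f1 m x0) (f1 n x0) < e/2"
      using e unfolding Cauchy_def by (meson half_gt_zero)
    show "\<exists>M. \<forall>x\<in>S. \<forall>m\<ge>M. \<forall>n\<ge>M. dist (f1 m x) (f1 n x) < e"
    proof (intro exI ballI allI impI)
      fix x m n assume x: "x \<in> S" and m: "max N1 N2 \<le> m" and n: "max N1 N2 \<le> n"
      have A0: "\<bar>(f1 m x - f1 n x) - (f1 m x0 - f1 n x0)\<bar> \<le> e' * \<bar>x - x0\<bar>"
        using N1 m n x x0 unfolding real_norm_def by simp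
      have "\<bar>x - x0\<bar> \<le> d - c" using x x0 S by auto
      hence "e' * \<bar>x - x0\<bar> \<le> e' * (d - c)" using e' by (simp add: mult_left_mono)
      moreover have "e' * (d - c) < e / 2" unfolding e'_def using cd e by (simp add: field_simps)
      ultimately have A: "\<bar>(f1 m x - f1 n x) - (f1 m x0 - f1 n x0)\<bar> < e / 2" using A0 by linarith
      have B: "\<bar>f1 m x0 - f1 n x0\<bar> < e / 2" using N2 m n unfolding dist_real_def by simp
      show "dist (f1 m x) (f1 n x) < e" using A B unfolding dist_real_def by linarith
    qed
  qed
  then obtain l where l: "uniform_limit S f1 l sequentially"
    using Cauchy_uniformly_convergent unfolding uniformly_convergent_on_def by blast
  have "l x = g1 x" if "x \<in> S" for x
    using LIMSEQ_unique[OF tendsto_uniform_limitI[OF l that] conjunct1[OF bspec[OF g1 that]]] .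
  hence "uniform_limit S f1 l sequentially = uniform_limit S f1 g1 sequentially"
    by (intro uniform_limit_cong) auto
  hence Ug1: "uniform_limit S f1 g1 sequentially" using l by simp
  have derf: "(f n has_derivative (*) (f1 n x)) (at x within S)" if "x \<in> S" for n x
    using D[OF that] unfolding has_field_derivative_def by (blast intro: has_derivative_at_withinI)
  obtain g0 where g0: "\<forall>x\<in>S. (\<lambda>n. f n x) \<longlonglongrightarrow> g0 x \<and> (g0 has_derivative (*) (g1 x)) (at x within S)"
    using has_derivative_sequence[OF cS(1) derf unif_nle[OF Ug1] x0 Fl[OF x0]] by blast
  show ?thesis
  proof (intro exI ballI conjI)
    fix x assume x: "x \<in> S"
    have "(g0 has_real_derivative g1 x) (at x)"
      using conjunct2[OF bspec[OF g0 x]] unfolding has_field_derivative_def at_within_open[OF x cS(2)] .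
    moreover have "g0 y = F y" if "y \<in> S" for y
      using LIMSEQ_unique[OF conjunct1[OF bspec[OF g0 that]] Fl[OF that]] .
    ultimately show "(F has_real_derivative g1 x) (at x)"
      by (rule has_field_derivative_transform_within_open[OF _ cS(2) x]) auto
    show "(g1 has_real_derivative G x) (at x)"
      using conjunct2[OF bspec[OF g1 x]] unfolding has_field_derivative_def at_within_open[OF x cS(2)] .
  qed
qed



lemma lip:
  fixes f f1 :: "real \<Rightarrow> real"
  assumes cont: "continuous_on {c..d} f"
    and D: "\<And>x. c < x \<Longrightarrow> x < d \<Longrightarrow> (f has_real_derivative f1 x) (at x)"
    and B: "\<And>x. c < x \<Longrightarrow> x < d \<Longrightarrow> \<bar>f1 x\<bar> \<le> M"
    and x: "c \<le> x" "x \<le> d" and y: "c \<le> y" "y \<le> d"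
  shows "\<bar>f x - f y\<bar> \<le> M * \<bar>x - y\<bar>"
proof -
  have main: "\<bar>f v - f u\<bar> \<le> M * (v - u)" if uv: "c \<le> u" "u < v" "v \<le> d" for u v
  proof -
    have "{u..v} \<subseteq> {c..d}" using uv by auto
    hence "continuous_on {u..v} f" using continuous_on_subset[OF cont] by blast
    moreover have "f differentiable at t" if "u < t" "t < v" for t
    proof -
      have "c < t" "t < d" using that uv by auto
      thus ?thesis using D real_differentiable_def by blast
    qed
    ultimately obtain l z where z: "u < z" "z < v" "(f has_real_derivative l) (at z)"
       "f v - f u = (v - u) * l"
      using MVT[OF uv(2)] by blast
    have cz: "c < z" "z < d" using z uv by auto
    have "l = f1 z" using DERIV_unique[OF z(3) D[OF cz]] .
    hence "\<bar>l\<bar> \<le> M" using B[OF cz] by simp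
    hence "(v - u) * \<bar>l\<bar> \<le> (v - u) * M" using uv by (simp add: mult_left_mono)
    moreover have "\<bar>f v - f u\<bar> = (v - u) * \<bar>l\<bar>" using z(4) uv by (simp add: abs_mult)
    ultimately show ?thesis by (simp add: mult.commute)
  qed
  show ?thesis
  proof (cases x y rule: linorder_cases)
    case less thus ?thesis using main[of x y] x y by (simp add: abs_minus_commute)
  next
    case equal thus ?thesis by simp
  next
    case greater thus ?thesis using main[of y x] x y by simp
  qed
qed

lemma d1:
  fixes f f1 f2 :: "real \<Rightarrow> real"
  assumes L: "L > 0" and cont: "continuous_on {0..L} f" and e: "f 0 = f L"
    and D: "\<And>x. 0 < x \<Longrightarrow> x < L \<Longrightarrow> (f has_real_derivative f1 x) (at x) \<and> (f1 has_real_derivative f2 x) (at x)"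
    and B: "\<And>x. 0 < x \<Longrightarrow> x < L \<Longrightarrow> \<bar>f2 x\<bar> \<le> C"
    and x: "0 < x" "x < L"
  shows "\<bar>f1 x\<bar> \<le> C * L"
proof -
  have "f differentiable at t" if "0 < t" "t < L" for t
    using D[OF that] real_differentiable_def by blast
  then obtain l z where z: "0 < z" "z < L" "(f has_real_derivative l) (at z)" "f L - f 0 = (L - 0) * l"
    using MVT[OF L cont] by blast
  have "l = 0" using z(4) e L by simp
  moreover have "l = f1 z" using DERIV_unique[OF z(3)] D[OF z(1,2)] by blast
  ultimately have f1z: "f1 z = 0" by simp
  define c where "c = min x z"
  define d where "d = max x z"
  have cd: "0 < c" "d < L" "c \<le> x" "x \<le> d" "c \<le> z" "z \<le> d" using x z by (auto simp: c_def d_def)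
  have "continuous_on {c..d} f1"
  proof (rule continuous_at_imp_continuous_on, rule ballI)
    fix t assume "t \<in> {c..d}"
    hence "0 < t" "t < L" using cd by auto
    thus "isCont f1 t" using D DERIV_isCont by blast
  qed
  hence "\<bar>f1 x - f1 z\<bar> \<le> C * \<bar>x - z\<bar>"
    by (rule lip[of c d f1 f2 C x z]) (use D B cd in auto)
  moreover have "\<bar>x - z\<bar> \<le> L" using x z by auto
  moreover have "C \<ge> 0" using B[OF x] by linarith
  ultimately have "\<bar>f1 x\<bar> \<le> C * L" using f1z
    by (smt (verit) mult_left_mono)
  thus ?thesis .
qed



lemma endpt:
  fixes f :: "real \<Rightarrow> real"
  assumes L: "L > 0" and cont: "continuous_on {0..L} f" and z: "\<And>t. 0 < t \<Longrightarrow> t < L \<Longrightarrow> f t = 0"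
  shows "f 0 = 0"
proof (rule ccontr)
  assume ne: "f 0 \<noteq> 0"
  hence "\<bar>f 0\<bar> > 0" by simp
  then obtain d where d: "d > 0" "\<forall>x'\<in>{0..L}. dist x' 0 < d \<longrightarrow> dist (f x') (f 0) < \<bar>f 0\<bar>"
    using cont L unfolding continuous_on_iff by (metis atLeastAtMost_iff order_less_imp_le order_refl)
  define t where "t = min (d/2) (L/2)"
  have t: "0 < t" "t < L" "t < d" using d L by (auto simp: t_def min_def)
  have "dist (f t) (f 0) < \<bar>f 0\<bar>" using d(2) t by (auto simp: dist_real_def)
  thus False using z[OF t(1,2)] by (simp add: dist_real_def)
qed

lemma bnd:
  fixes p q A :: real
  assumes "0 \<le> p" "p \<le> 1" "0 \<le> q" "q \<le> 1"
  shows "\<bar>p * (1 - p - A * q)\<bar> \<le> 1 + \<bar>A\<bar>"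
proof -
  have "\<bar>A * q\<bar> \<le> \<bar>A\<bar>" using assms by (simp add: abs_mult mult_left_le)
  hence "\<bar>1 - p - A * q\<bar> \<le> 1 + \<bar>A\<bar>" using assms by linarith
  moreover have "\<bar>p * (1 - p - A * q)\<bar> \<le> \<bar>1 - p - A * q\<bar>"
    using assms by (simp add: abs_mult mult_left_le_one_le)
  ultimately show ?thesis by linarith
qed

lemma bnd2:
  fixes p q A :: real
  assumes "0 \<le> p" "p \<le> 1" "0 \<le> q" "q \<le> 1"
  shows "\<bar>p * (1 - p - A * q)\<bar> \<le> (2 + \<bar>A\<bar>) * \<bar>p\<bar>"
proof -
  have "\<bar>A * q\<bar> \<le> \<bar>A\<bar>" using assms by (simp add: abs_mult mult_left_le)
  hence "\<bar>1 - p - A * q\<bar> \<le> 2 + \<bar>A\<bar>" using assms by linarith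
  hence "\<bar>p\<bar> * \<bar>1 - p - A * q\<bar> \<le> \<bar>p\<bar> * (2 + \<bar>A\<bar>)" by (rule mult_left_mono) simp
  thus ?thesis by (simp add: abs_mult mult.commute)
qed

lemma barrier_K:
  assumes L: "L > 0" and B: "barrier L a b \<phi> \<psi>"
  shows "\<exists>x. 0 < x \<and> x < L \<and> a * \<psi> x \<le> 1"
proof -
  from B obtain \<phi>' \<phi>'' where D: "\<forall>x\<in>{0<..<L}. (\<phi> has_real_derivative \<phi>' x) (at x) \<and> (\<phi>' has_real_derivative \<phi>'' x) (at x) \<and>
        - \<phi>'' x = \<phi> x * (1 - \<phi> x - a * \<psi> x)"
    unfolding barrier_def by blast
  have cont: "continuous_on {0..L} \<phi>" and bd: "\<phi> 0 = 0" "\<phi> L = 0"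
    and rng: "\<forall>x\<in>{0<..<L}. 0 < \<phi> x \<and> \<phi> x < 1 \<and> 0 < \<psi> x \<and> \<psi> x < 1"
    using B unfolding barrier_def by auto
  obtain x where x: "x \<in> {0..L}" "\<forall>y\<in>{0..L}. \<phi> y \<le> \<phi> x"
    using continuous_attains_sup[OF compact_Icc _ cont] L by auto
  have "\<phi> (L/2) > 0" using rng L by auto
  moreover have "\<phi> (L/2) \<le> \<phi> x" using x(2) L by simp
  ultimately have "\<phi> x > 0" by linarith
  hence xi: "0 < x" "x < L" using x(1) bd by (auto simp: less_le)
  have "\<phi>'' x \<le> 0"
    by (rule maxp[of 0 x L \<phi> \<phi>']) (use xi D x in auto)
  moreover have "- \<phi>'' x = \<phi> x * (1 - \<phi> x - a * \<psi> x)" using D xi by simp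
  ultimately have "\<phi> x * (1 - \<phi> x - a * \<psi> x) \<ge> 0" by linarith
  hence "1 - \<phi> x - a * \<psi> x \<ge> 0" using \<open>\<phi> x > 0\<close> by (simp add: zero_le_mult_iff)
  thus ?thesis using xi \<open>\<phi> x > 0\<close> by (intro exI[of _ x]) auto
qed



lemma bdd_img: fixes h :: "real \<Rightarrow> real" assumes "\<And>x. x \<in> S \<Longrightarrow> \<bar>h x\<bar> \<le> K" shows "bounded (h ` S)"
  unfolding bounded_iff using assms by auto

lemma ulim_expr:
  fixes f g :: "nat \<Rightarrow> real \<Rightarrow> real" and A :: "nat \<Rightarrow> real"
  assumes uf: "uniform_limit S f F sequentially" and ug: "uniform_limit S g G sequentially"
    and A: "A \<longlonglongrightarrow> \<alpha>" and bF: "\<And>x. x \<in> S \<Longrightarrow> \<bar>F x\<bar> \<le> 1" and bG: "\<And>x. x \<in> S \<Longrightarrow> \<bar>G x\<bar> \<le> 1"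
  shows "uniform_limit S (\<lambda>n x. - (f n x * (1 - f n x - A n * g n x))) (\<lambda>x. - (F x * (1 - F x - \<alpha> * G x))) sequentially"
proof -
  have cA: "uniform_limit S (\<lambda>n x. A n) (\<lambda>x. \<alpha>) sequentially"
    unfolding uniform_limit_sequentially_iff
  proof (intro allI impI)
    fix e :: real assume "e > 0"
    then obtain N where "\<forall>n\<ge>N. dist (A n) \<alpha> < e" using A unfolding lim_sequentially by blast
    thus "\<exists>N. \<forall>n\<ge>N. \<forall>x\<in>S. dist (A n) \<alpha> < e" by blast
  qed
  have 1: "uniform_limit S (\<lambda>n x. A n * g n x) (\<lambda>x. \<alpha> * G x) sequentially"
  proof (rule uniform_lim_mult[OF cA ug])
    show "bounded ((\<lambda>x. \<alpha>) ` S)" by (rule bdd_img[of _ _ "\<bar>\<alpha>\<bar>"]) simp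
    show "bounded (G ` S)" by (rule bdd_img[of _ _ 1]) (rule bG)
  qed
  have 2: "uniform_limit S (\<lambda>n x. 1 - f n x - A n * g n x) (\<lambda>x. 1 - F x - \<alpha> * G x) sequentially"
    by (rule uniform_limit_minus[OF uniform_limit_minus[OF uniform_limit_const uf] 1])
  have "\<bar>1 - F x - \<alpha> * G x\<bar> \<le> 2 + \<bar>\<alpha>\<bar>" if "x \<in> S" for x
  proof -
    have "\<bar>\<alpha> * G x\<bar> \<le> \<bar>\<alpha>\<bar>" using bG[OF that] by (simp add: abs_mult mult_left_le)
    thus ?thesis using bF[OF that] by linarith
  qed
  hence 3: "uniform_limit S (\<lambda>n x. f n x * (1 - f n x - A n * g n x)) (\<lambda>x. F x * (1 - F x - \<alpha> * G x)) sequentially"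
    by (intro uniform_lim_mult[OF uf 2] bdd_img[of _ _ 1] bdd_img[of _ _ "2 + \<bar>\<alpha>\<bar>"] bF) auto
  show ?thesis using uniform_limit_uminus[OF 3] by simp
qed


lemma lin_aux: "(p::real) \<le> A \<Longrightarrow> A < B + d/2 \<Longrightarrow> q < p + d/2 \<Longrightarrow> M \<le> q \<Longrightarrow> d = M - B \<Longrightarrow> False"
  by linarith

theorem proposition2:
  fixes L a b :: real and an bn :: "nat \<Rightarrow> real"
  assumes "L > 0"
    and "\<And>n. an n > 0" and "\<And>n. bn n > max (an n) 1"
    and "\<And>n. \<exists>\<phi> \<psi>. barrier L (an n) (bn n) \<phi> \<psi>"
    and "an \<longlonglongrightarrow> a" and "bn \<longlonglongrightarrow> b"
    and "a > 0" and "b > max a 1" and "a > 1"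
  shows "\<exists>\<phi> \<psi>. barrier L a b \<phi> \<psi>"
proof -
  note L = assms(1)
  define S where "S = {0<..<L}"
  have "\<forall>n. \<exists>p. barrier L (an n) (bn n) (fst p) (snd p)" using assms(4) by auto
  then obtain P where P: "\<forall>n. barrier L (an n) (bn n) (fst (P n)) (snd (P n))"
    using choice[of "\<lambda>n p. barrier L (an n) (bn n) (fst p) (snd p)"] by blast
  define \<Phi> where "\<Phi> n = fst (P n)" for n
  define \<Psi> where "\<Psi> n = snd (P n)" for n
  have bar: "barrier L (an n) (bn n) (\<Phi> n) (\<Psi> n)" for n using P by (simp add: \<Phi>_def \<Psi>_def)
  have "\<forall>n. \<exists>q. \<forall>x\<in>{0<..<L}.
        (\<Phi> n has_real_derivative fst q x) (at x) \<and> (fst q has_real_derivative fst (snd q) x) (at x) \<and>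
        (\<Psi> n has_real_derivative fst (snd (snd q)) x) (at x) \<and> (fst (snd (snd q)) has_real_derivative snd (snd (snd q)) x) (at x) \<and>
        - fst (snd q) x = \<Phi> n x * (1 - \<Phi> n x - an n * \<Psi> n x) \<and>
        - snd (snd (snd q)) x = \<Psi> n x * (1 - bn n * \<Phi> n x - \<Psi> n x)"
  proof
    fix n
    from bar[of n] obtain \<phi>' \<phi>'' \<psi>' \<psi>'' where "\<forall>x\<in>{0<..<L}.
        (\<Phi> n has_real_derivative \<phi>' x) (at x) \<and> (\<phi>' has_real_derivative \<phi>'' x) (at x) \<and>
        (\<Psi> n has_real_derivative \<psi>' x) (at x) \<and> (\<psi>' has_real_derivative \<psi>'' x) (at x) \<and>
        - \<phi>'' x = \<Phi> n x * (1 - \<Phi> n x - an n * \<Psi> n x) \<and>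
        - \<psi>'' x = \<Psi> n x * (1 - bn n * \<Phi> n x - \<Psi> n x)"
      unfolding barrier_def by blast
    thus "\<exists>q. \<forall>x\<in>{0<..<L}.
        (\<Phi> n has_real_derivative fst q x) (at x) \<and> (fst q has_real_derivative fst (snd q) x) (at x) \<and>
        (\<Psi> n has_real_derivative fst (snd (snd q)) x) (at x) \<and> (fst (snd (snd q)) has_real_derivative snd (snd (snd q)) x) (at x) \<and>
        - fst (snd q) x = \<Phi> n x * (1 - \<Phi> n x - an n * \<Psi> n x) \<and>
        - snd (snd (snd q)) x = \<Psi> n x * (1 - bn n * \<Phi> n x - \<Psi> n x)"
      by (intro exI[of _ "(\<phi>', \<phi>'', \<psi>', \<psi>'')"]) simp
  qed
  then obtain Q where Q: "\<forall>n. \<forall>x\<in>{0<..<L}.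
        (\<Phi> n has_real_derivative fst (Q n) x) (at x) \<and> (fst (Q n) has_real_derivative fst (snd (Q n)) x) (at x) \<and>
        (\<Psi> n has_real_derivative fst (snd (snd (Q n))) x) (at x) \<and> (fst (snd (snd (Q n))) has_real_derivative snd (snd (snd (Q n))) x) (at x) \<and>
        - fst (snd (Q n)) x = \<Phi> n x * (1 - \<Phi> n x - an n * \<Psi> n x) \<and>
        - snd (snd (snd (Q n))) x = \<Psi> n x * (1 - bn n * \<Phi> n x - \<Psi> n x)"
    by (rule choice[THEN exE]) blast
  define \<Phi>1 where "\<Phi>1 n = fst (Q n)" for n
  define \<Phi>2 where "\<Phi>2 n = fst (snd (Q n))" for n
  define \<Psi>1 where "\<Psi>1 n = fst (snd (snd (Q n)))" for n
  define \<Psi>2 where "\<Psi>2 n = snd (snd (snd (Q n)))" for n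
  have dP: "(\<Phi> n has_real_derivative \<Phi>1 n x) (at x) \<and> (\<Phi>1 n has_real_derivative \<Phi>2 n x) (at x)"
    if "0 < x" "x < L" for n x using Q that by (simp add: \<Phi>1_def \<Phi>2_def)
  have dS: "(\<Psi> n has_real_derivative \<Psi>1 n x) (at x) \<and> (\<Psi>1 n has_real_derivative \<Psi>2 n x) (at x)"
    if "0 < x" "x < L" for n x using Q that by (simp add: \<Psi>1_def \<Psi>2_def)
  have eP: "\<Phi>2 n x = - (\<Phi> n x * (1 - \<Phi> n x - an n * \<Psi> n x))"
  if "0 < x" "x < L" for n x
  proof -
    have "- \<Phi>2 n x = \<Phi> n x * (1 - \<Phi> n x - an n * \<Psi> n x)" using Q that unfolding \<Phi>2_def by force
    thus ?thesis by (simp add: algebra_simps)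
  qed
  have eS: "\<Psi>2 n x = - (\<Psi> n x * (1 - \<Psi> n x - bn n * \<Phi> n x))"
  if "0 < x" "x < L" for n x
  proof -
    have "- \<Psi>2 n x = \<Psi> n x * (1 - bn n * \<Phi> n x - \<Psi> n x)" using Q that unfolding \<Psi>2_def by force
    thus ?thesis by (simp add: algebra_simps)
  qed
  have contP: "continuous_on {0..L} (\<Phi> n)" and contS: "continuous_on {0..L} (\<Psi> n)"
    and bdP: "\<Phi> n 0 = 0" "\<Phi> n L = 0" and bdS: "\<Psi> n 0 = 1" "\<Psi> n L = 1"
    for n using bar[of n] unfolding barrier_def by auto
  have rngI: "0 < \<Phi> n x \<and> \<Phi> n x < 1 \<and> 0 < \<Psi> n x \<and> \<Psi> n x < 1" if "0 < x" "x < L" for n x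
    using bar[of n] that unfolding barrier_def by auto
  have rngC: "0 \<le> \<Phi> n x \<and> \<Phi> n x \<le> 1 \<and> 0 \<le> \<Psi> n x \<and> \<Psi> n x \<le> 1" if "0 \<le> x" "x \<le> L" for n x
  proof (cases "x = 0 \<or> x = L")
    case True thus ?thesis using bdP[of n] bdS[of n] by auto
  next
    case False thus ?thesis using rngI[of x n] that by force
  qed
  obtain KA where KA: "KA > 0" "\<And>n. norm (an n) \<le> KA"
    using BseqE[OF convergent_imp_Bseq[OF convergentI[OF assms(5)]]] by blast
  obtain KB where KB: "KB > 0" "\<And>n. norm (bn n) \<le> KB"
    using BseqE[OF convergent_imp_Bseq[OF convergentI[OF assms(6)]]] by blast
  define C where "C = 1 + KA + KB"
  have C: "C \<ge> 1" using KA KB by (simp add: C_def)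
  have CL: "0 < C * L" using C L by simp
  hence CL2: "0 < 2 * C * L + 1" by simp
  have b2P: "\<bar>\<Phi>2 n x\<bar> \<le> C" if "0 < x" "x < L" for n x
  proof -
    have "\<bar>\<Phi>2 n x\<bar> \<le> 1 + \<bar>an n\<bar>" unfolding eP[OF that] using bnd[of "\<Phi> n x" "\<Psi> n x" "an n"] rngI[OF that, of n] by simp
    thus ?thesis using KA(2)[of n] KB C_def by simp
  qed
  have b2S: "\<bar>\<Psi>2 n x\<bar> \<le> C" if "0 < x" "x < L" for n x
  proof -
    have "\<bar>\<Psi>2 n x\<bar> \<le> 1 + \<bar>bn n\<bar>" unfolding eS[OF that] using bnd[of "\<Psi> n x" "\<Phi> n x" "bn n"] rngI[OF that, of n] by simp
    thus ?thesis using KB(2)[of n] KA C_def by simp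
  qed
  have b1P: "\<bar>\<Phi>1 n x\<bar> \<le> C * L" if "0 < x" "x < L" for n x
    by (rule d1[OF L contP _ dP b2P that]) (simp_all add: bdP)
  have b1S: "\<bar>\<Psi>1 n x\<bar> \<le> C * L" if "0 < x" "x < L" for n x
    by (rule d1[OF L contS _ dS b2S that]) (simp_all add: bdS)
  have lipP: "\<bar>\<Phi> n x - \<Phi> n y\<bar> \<le> (C * L) * \<bar>x - y\<bar>" if "0 \<le> x" "x \<le> L" "0 \<le> y" "y \<le> L" for n x y
    by (rule lip[OF contP _ _ that]) (use dP b1P in auto)
  have lipS: "\<bar>\<Psi> n x - \<Psi> n y\<bar> \<le> (C * L) * \<bar>x - y\<bar>" if "0 \<le> x" "x \<le> L" "0 \<le> y" "y \<le> L" for n x y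
    by (rule lip[OF contS _ _ that]) (use dS b1S in auto)
  define F where "F n x = (\<Phi> n x, \<Psi> n x)" for n x
  obtain g and k :: "nat \<Rightarrow> nat" where g: "continuous_on {0..L} g" "strict_mono k"
    "\<And>e. 0 < e \<Longrightarrow> \<exists>N. \<forall>n x. n \<ge> N \<and> x \<in> {0..L} \<longrightarrow> norm (F (k n) x - g x) < e"
  proof (rule Arzela_Ascoli[of "{0..L}" F 2])
    show "compact {0..L::real}" by simp
    show "norm (F n x) \<le> 2" if "x \<in> {0..L}" for n x
    proof -
      have "norm (F n x) \<le> norm (\<Phi> n x) + norm (\<Psi> n x)" unfolding F_def by (rule norm_Pair_le)
      thus ?thesis using rngC[of x n] that by auto
    qed
    fix x and e :: real assume x: "x \<in> {0..L}" and e: "0 < e"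
    show "\<exists>d>0. \<forall>n y. y \<in> {0..L} \<and> norm (x - y) < d \<longrightarrow> norm (F n x - F n y) < e"
    proof (intro exI[of _ "e / (2 * C * L + 1)"] conjI allI impI)
      have "0 < C * L" using C L by simp
      thus "0 < e / (2 * C * L + 1)" using e by simp
      fix n y assume y: "y \<in> {0..L} \<and> norm (x - y) < e / (2 * C * L + 1)"
      have "norm (F n x - F n y) \<le> \<bar>\<Phi> n x - \<Phi> n y\<bar> + \<bar>\<Psi> n x - \<Psi> n y\<bar>"
        unfolding F_def using norm_Pair_le[of "\<Phi> n x - \<Phi> n y" "\<Psi> n x - \<Psi> n y"] by simp
      also have "\<dots> \<le> (2 * C * L) * \<bar>x - y\<bar>" using lipP[of x y n] lipS[of x y n] x y by auto
      also have "\<dots> \<le> (2 * C * L + 1) * \<bar>x - y\<bar>" by (simp add: algebra_simps)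
      also have "\<dots> < (2 * C * L + 1) * (e / (2 * C * L + 1))"
        using y CL2 by (intro mult_strict_left_mono) auto
      also have "\<dots> = e" using CL2 by simp
      finally show "norm (F n x - F n y) < e" .
    qed
  qed blast
  define x0 where "x0 = L / 2"
  have x0: "0 < x0" "x0 < L" "x0 \<in> S" using L by (auto simp: x0_def S_def)
  define w where "w n = (\<Phi>1 (k n) x0, \<Psi>1 (k n) x0)" for n
  have "w n \<in> cball 0 (2 * C * L)" for n
  proof -
    have "norm (w n) \<le> norm (\<Phi>1 (k n) x0) + norm (\<Psi>1 (k n) x0)" unfolding w_def by (rule norm_Pair_le)
    thus ?thesis using b1P[OF x0(1,2), of "k n"] b1S[OF x0(1,2), of "k n"] by auto
  qed
  then obtain l and r2 :: "nat \<Rightarrow> nat" where r2: "strict_mono r2" "(w \<circ> r2) \<longlonglongrightarrow> l"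
    using seq_compactE[OF compact_imp_seq_compact[OF compact_cball]] by metis
  define r where "r = k \<circ> r2"
  have r: "strict_mono r" unfolding r_def using g(2) r2(1) by (rule strict_mono_o)
  define \<phi> where "\<phi> x = fst (g x)" for x
  define \<psi> where "\<psi> x = snd (g x)" for x
  have unifr: "\<exists>N. \<forall>n\<ge>N. \<forall>x\<in>{0..L}. \<bar>\<Phi> (r n) x - \<phi> x\<bar> < e \<and> \<bar>\<Psi> (r n) x - \<psi> x\<bar> < e" if e: "e > 0" for e
  proof -
    obtain N where N: "\<forall>n x. n \<ge> N \<and> x \<in> {0..L} \<longrightarrow> norm (F (k n) x - g x) < e" using g(3)[OF e] by blast
    show ?thesis
    proof (intro exI allI impI ballI)
      fix n x assume n: "N \<le> n" and x: "x \<in> {0..L}"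
      have "n \<le> r2 n" using seq_suble[OF r2(1)] by simp
      hence *: "norm (F (k (r2 n)) x - g x) < e" using N n x by auto
      have eqp: "F (k (r2 n)) x - g x = (\<Phi> (r n) x - \<phi> x, \<Psi> (r n) x - \<psi> x)"
        by (simp add: F_def r_def \<phi>_def \<psi>_def prod_eq_iff)
      have "\<bar>\<Phi> (r n) x - \<phi> x\<bar> \<le> norm (F (k (r2 n)) x - g x)"
        unfolding eqp using norm_fst_le[of "\<Phi> (r n) x - \<phi> x" "\<Psi> (r n) x - \<psi> x"] by (simp only: real_norm_def)
      moreover have "\<bar>\<Psi> (r n) x - \<psi> x\<bar> \<le> norm (F (k (r2 n)) x - g x)"
        unfolding eqp using norm_snd_le[of "\<Psi> (r n) x - \<psi> x" "\<Phi> (r n) x - \<phi> x"] by (simp only: real_norm_def)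
      ultimately show "\<bar>\<Phi> (r n) x - \<phi> x\<bar> < e \<and> \<bar>\<Psi> (r n) x - \<psi> x\<bar> < e" using * by linarith
    qed
  qed
  have UP: "uniform_limit {0..L} (\<lambda>n. \<Phi> (r n)) \<phi> sequentially"
    unfolding uniform_limit_sequentially_iff dist_real_def using unifr by meson
  have US: "uniform_limit {0..L} (\<lambda>n. \<Psi> (r n)) \<psi> sequentially"
    unfolding uniform_limit_sequentially_iff dist_real_def using unifr by meson
  have ptP: "(\<lambda>n. \<Phi> (r n) x) \<longlonglongrightarrow> \<phi> x" if "x \<in> {0..L}" for x
    using tendsto_uniform_limitI[OF UP that] .
  have ptS: "(\<lambda>n. \<Psi> (r n) x) \<longlonglongrightarrow> \<psi> x" if "x \<in> {0..L}" for x
    using tendsto_uniform_limitI[OF US that] .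
  have rngL: "0 \<le> \<phi> x \<and> \<phi> x \<le> 1 \<and> 0 \<le> \<psi> x \<and> \<psi> x \<le> 1" if "x \<in> {0..L}" for x
  proof -
    have x: "0 \<le> x" "x \<le> L" using that by auto
    show ?thesis
      using LIMSEQ_le_const[OF ptP[OF that]] LIMSEQ_le_const2[OF ptP[OF that]]
            LIMSEQ_le_const[OF ptS[OF that]] LIMSEQ_le_const2[OF ptS[OF that]] rngC[OF x]
      by meson
  qed
  have bdL: "\<phi> 0 = 0" "\<phi> L = 0" "\<psi> 0 = 1" "\<psi> L = 1"
  proof -
    have z: "0 \<in> {0..L}" "L \<in> {0..L}" using L by auto
    show "\<phi> 0 = 0" using LIMSEQ_unique[OF ptP[OF z(1)]] bdP by simp
    show "\<phi> L = 0" using LIMSEQ_unique[OF ptP[OF z(2)]] bdP by simp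
    show "\<psi> 0 = 1" using LIMSEQ_unique[OF ptS[OF z(1)]] bdS by simp
    show "\<psi> L = 1" using LIMSEQ_unique[OF ptS[OF z(2)]] bdS by simp
  qed
  have contL: "continuous_on {0..L} \<phi>" "continuous_on {0..L} \<psi>"
    unfolding \<phi>_def \<psi>_def using g(1) by (auto intro: continuous_on_fst continuous_on_snd)
  have SL: "S \<subseteq> {0..L}" by (auto simp: S_def)
  have anr: "(\<lambda>n. an (r n)) \<longlonglongrightarrow> a" using LIMSEQ_subseq_LIMSEQ[OF assms(5) r] by (simp add: o_def)
  have bnr: "(\<lambda>n. bn (r n)) \<longlonglongrightarrow> b" using LIMSEQ_subseq_LIMSEQ[OF assms(6) r] by (simp add: o_def)
  define G\<phi> where "G\<phi> x = - (\<phi> x * (1 - \<phi> x - a * \<psi> x))" for x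
  define G\<psi> where "G\<psi> x = - (\<psi> x * (1 - \<psi> x - b * \<phi> x))" for x
  have bL1: "\<And>x. x \<in> S \<Longrightarrow> \<bar>\<phi> x\<bar> \<le> 1" "\<And>x. x \<in> S \<Longrightarrow> \<bar>\<psi> x\<bar> \<le> 1" using rngL SL by force+
  have UP2: "uniform_limit S (\<lambda>n. \<Phi>2 (r n)) G\<phi> sequentially"
  proof -
    have "uniform_limit S (\<lambda>n x. - (\<Phi> (r n) x * (1 - \<Phi> (r n) x - an (r n) * \<Psi> (r n) x))) G\<phi> sequentially"
      unfolding G\<phi>_def
      by (rule ulim_expr[OF uniform_limit_on_subset[OF UP SL] uniform_limit_on_subset[OF US SL] anr bL1])
    moreover have "uniform_limit S (\<lambda>n x. - (\<Phi> (r n) x * (1 - \<Phi> (r n) x - an (r n) * \<Psi> (r n) x))) G\<phi> sequentially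
        = uniform_limit S (\<lambda>n. \<Phi>2 (r n)) G\<phi> sequentially"
      by (rule uniform_limit_cong) (auto simp: eP S_def)
    ultimately show ?thesis by simp
  qed
  have US2: "uniform_limit S (\<lambda>n. \<Psi>2 (r n)) G\<psi> sequentially"
  proof -
    have "uniform_limit S (\<lambda>n x. - (\<Psi> (r n) x * (1 - \<Psi> (r n) x - bn (r n) * \<Phi> (r n) x))) G\<psi> sequentially"
      unfolding G\<psi>_def
      by (rule ulim_expr[OF uniform_limit_on_subset[OF US SL] uniform_limit_on_subset[OF UP SL] bnr bL1(2,1)])
    moreover have "uniform_limit S (\<lambda>n x. - (\<Psi> (r n) x * (1 - \<Psi> (r n) x - bn (r n) * \<Phi> (r n) x))) G\<psi> sequentially
        = uniform_limit S (\<lambda>n. \<Psi>2 (r n)) G\<psi> sequentially"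
      by (rule uniform_limit_cong) (auto simp: eS S_def)
    ultimately show ?thesis by simp
  qed
  have wr: "(\<lambda>n. w (r2 n)) \<longlonglongrightarrow> l" using r2(2) by (simp add: o_def)
  have P1: "(\<lambda>n. \<Phi>1 (r n) x0) \<longlonglongrightarrow> fst l" using tendsto_fst[OF wr] by (simp add: w_def r_def)
  have S1: "(\<lambda>n. \<Psi>1 (r n) x0) \<longlonglongrightarrow> snd l" using tendsto_snd[OF wr] by (simp add: w_def r_def)
  have dPS: "(\<Phi> (r n) has_real_derivative \<Phi>1 (r n) x) (at x) \<and> (\<Phi>1 (r n) has_real_derivative \<Phi>2 (r n) x) (at x)"
    if "x \<in> S" for n x using dP that by (auto simp: S_def)
  have dSS: "(\<Psi> (r n) has_real_derivative \<Psi>1 (r n) x) (at x) \<and> (\<Psi>1 (r n) has_real_derivative \<Psi>2 (r n) x) (at x)"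
    if "x \<in> S" for n x using dS that by (auto simp: S_def)
  have ptPS: "(\<lambda>n. \<Phi> (r n) x) \<longlonglongrightarrow> \<phi> x" if "x \<in> S" for x using ptP SL that by auto
  have ptSS: "(\<lambda>n. \<Psi> (r n) x) \<longlonglongrightarrow> \<psi> x" if "x \<in> S" for x using ptS SL that by auto
  obtain \<phi>1 where \<phi>1: "\<forall>x\<in>S. (\<phi> has_real_derivative \<phi>1 x) (at x) \<and> (\<phi>1 has_real_derivative G\<phi> x) (at x)"
    using conv[of S 0 L x0 "\<lambda>n. \<Phi> (r n)" "\<lambda>n. \<Phi>1 (r n)" "\<lambda>n. \<Phi>2 (r n)" "G\<phi>" "fst l" \<phi>, OF S_def x0(3) dPS UP2 P1 ptPS]
    by blast
  obtain \<psi>1 where \<psi>1: "\<forall>x\<in>S. (\<psi> has_real_derivative \<psi>1 x) (at x) \<and> (\<psi>1 has_real_derivative G\<psi> x) (at x)"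
    using conv[of S 0 L x0 "\<lambda>n. \<Psi> (r n)" "\<lambda>n. \<Psi>1 (r n)" "\<lambda>n. \<Psi>2 (r n)" "G\<psi>" "snd l" \<psi>, OF S_def x0(3) dSS US2 S1 ptSS]
    by blast
  have d\<phi>: "(\<phi> has_real_derivative \<phi>1 x) (at x)" "(\<phi>1 has_real_derivative G\<phi> x) (at x)" if "0 < x" "x < L" for x
    using \<phi>1 that by (auto simp: S_def)
  have d\<psi>: "(\<psi> has_real_derivative \<psi>1 x) (at x)" "(\<psi>1 has_real_derivative G\<psi> x) (at x)" if "0 < x" "x < L" for x
    using \<psi>1 that by (auto simp: S_def)
  have rI: "0 \<le> \<phi> x" "\<phi> x \<le> 1" "0 \<le> \<psi> x" "\<psi> x \<le> 1" if "0 < x" "x < L" for x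
    using rngL[of x] that by auto
  have bpos: "b > 0" using assms(8) by simp
  have \<psi>pos: "\<psi> y > 0" if y: "0 < y" "y < L" for y
  proof (rule ccontr)
    assume "\<not> \<psi> y > 0"
    hence \<psi>y: "\<psi> y = 0" using rI(3)[OF y] by simp
    have mn: "\<psi> y \<le> \<psi> t" if "0 < t" "t < L" for t using rI(3)[OF that] \<psi>y by simp
    have "\<psi>1 y = 0"
    proof (rule DERIV_local_min[OF d\<psi>(1)[OF y], of "min y (L - y)"])
      show "0 < min y (L - y)" using y by simp
      show "\<forall>t. \<bar>y - t\<bar> < min y (L - y) \<longrightarrow> \<psi> y \<le> \<psi> t"
        using mn by (auto simp: abs_if split: if_splits)
    qed
    have z: "\<psi> t = 0" if "0 < t" "t < L" for t
    proof (rule gron[of 0 L \<psi> \<psi>1 G\<psi> "2 + \<bar>b\<bar>" y])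
      show "\<bar>G\<psi> t\<bar> \<le> (2 + \<bar>b\<bar>) * \<bar>\<psi> t\<bar>" if "0 < t" "t < L" for t
        unfolding G\<psi>_def using bnd2[of "\<psi> t" "\<phi> t" b] rI[OF that] by simp
    qed (use d\<psi> y that \<psi>y \<open>\<psi>1 y = 0\<close> in auto)
    have "\<psi> 0 = 0" by (rule endpt[OF L contL(2) z])
    thus False using bdL by simp
  qed
  obtain m where m: "m \<in> {0..L}" "\<And>t. t \<in> {0..L} \<Longrightarrow> \<psi> m \<le> \<psi> t"
    using continuous_attains_inf[OF compact_Icc _ contL(2)] L by auto
  have "\<forall>n. \<exists>x. 0 < x \<and> x < L \<and> an n * \<Psi> n x \<le> 1" using barrier_K[OF L bar] by blast
  then obtain X where X: "\<And>n. 0 < X n \<and> X n < L \<and> an n * \<Psi> n (X n) \<le> 1" by metis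
  have m1a: "\<psi> m \<le> 1 / a"
  proof (rule ccontr)
    assume "\<not> \<psi> m \<le> 1 / a"
    define \<delta> where "\<delta> = \<psi> m - 1 / a"
    have \<delta>: "\<delta> > 0" using \<open>\<not> \<psi> m \<le> 1 / a\<close> by (simp add: \<delta>_def)
    have "(\<lambda>n. 1 / an (r n)) \<longlonglongrightarrow> 1 / a" using tendsto_divide[OF tendsto_const anr] assms(7) by simp
    then obtain N1 where N1: "\<forall>n\<ge>N1. dist (1 / an (r n)) (1 / a) < \<delta> / 2"
      using \<delta> unfolding lim_sequentially by (meson half_gt_zero)
    obtain N2 where N2: "\<forall>n\<ge>N2. \<forall>x\<in>{0..L}. \<bar>\<Phi> (r n) x - \<phi> x\<bar> < \<delta> / 2 \<and> \<bar>\<Psi> (r n) x - \<psi> x\<bar> < \<delta> / 2"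
      using unifr[of "\<delta> / 2"] \<delta> by auto
    define n where "n = max N1 N2"
    define x where "x = X (r n)"
    have x: "x \<in> {0..L}" using X[of "r n"] by (auto simp: x_def)
    have "an (r n) * \<Psi> (r n) x \<le> 1" using X[of "r n"] by (simp add: x_def)
    hence "\<Psi> (r n) x \<le> 1 / an (r n)" using assms(2)[of "r n"] by (simp add: field_simps)
    moreover have "1 / an (r n) < 1 / a + \<delta> / 2"
    proof -
      have "dist (1 / an (r n)) (1 / a) < \<delta> / 2" using N1 by (simp add: n_def)
      thus ?thesis unfolding dist_real_def by linarith
    qed
    moreover have "\<psi> x < \<Psi> (r n) x + \<delta> / 2"
    proof -
      have "n \<ge> N2" by (simp add: n_def)
      hence "\<bar>\<Psi> (r n) x - \<psi> x\<bar> < \<delta> / 2" using N2 x by blast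
      thus ?thesis by linarith
    qed
    moreover have "\<psi> m \<le> \<psi> x" using m(2)[OF x] .
    ultimately show False using lin_aux \<delta>_def by blast
  qed
  have \<phi>pos: "\<phi> y > 0" if y: "0 < y" "y < L" for y
  proof (rule ccontr)
    assume "\<not> \<phi> y > 0"
    hence \<phi>y: "\<phi> y = 0" using rI(1)[OF y] by simp
    have mn: "\<phi> y \<le> \<phi> t" if "0 < t" "t < L" for t using rI(1)[OF that] \<phi>y by simp
    have "\<phi>1 y = 0"
    proof (rule DERIV_local_min[OF d\<phi>(1)[OF y], of "min y (L - y)"])
      show "0 < min y (L - y)" using y by simp
      show "\<forall>t. \<bar>y - t\<bar> < min y (L - y) \<longrightarrow> \<phi> y \<le> \<phi> t"
        using mn by (auto simp: abs_if split: if_splits)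
    qed
    have z: "\<phi> t = 0" if "0 < t" "t < L" for t
    proof (rule gron[of 0 L \<phi> \<phi>1 G\<phi> "2 + \<bar>a\<bar>" y])
      show "\<bar>G\<phi> t\<bar> \<le> (2 + \<bar>a\<bar>) * \<bar>\<phi> t\<bar>" if "0 < t" "t < L" for t
        unfolding G\<phi>_def using bnd2[of "\<phi> t" "\<psi> t" a] rI[OF that] by simp
    qed (use d\<phi> y that \<phi>y \<open>\<phi>1 y = 0\<close> in auto)
    have "1 / a < 1" using assms(9) by simp
    hence "\<psi> m < 1" using m1a by linarith
    hence mI: "0 < m" "m < L" using m(1) bdL by (auto simp: less_le)
    have "G\<psi> m \<ge> 0"
      by (rule minp[of 0 m L \<psi> \<psi>1]) (use mI d\<psi> m in auto)
    moreover have "G\<psi> m = - (\<psi> m * (1 - \<psi> m))" using z[OF mI] by (simp add: G\<psi>_def)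
    moreover have "\<psi> m * (1 - \<psi> m) > 0" using \<psi>pos[OF mI] \<open>\<psi> m < 1\<close> by simp
    ultimately show False by linarith
  qed
  have \<phi>lt: "\<phi> y < 1" if y: "0 < y" "y < L" for y
  proof (rule ccontr)
    assume "\<not> \<phi> y < 1"
    hence \<phi>y: "\<phi> y = 1" using rI(2)[OF y] by simp
    have "G\<phi> y \<le> 0"
      by (rule maxp[of 0 y L \<phi> \<phi>1]) (use y d\<phi> rI \<phi>y in auto)
    moreover have "G\<phi> y = a * \<psi> y" using \<phi>y by (simp add: G\<phi>_def)
    moreover have "a * \<psi> y > 0" using assms(7) \<psi>pos[OF y] by simp
    ultimately show False by linarith
  qed
  have \<psi>lt: "\<psi> y < 1" if y: "0 < y" "y < L" for y
  proof (rule ccontr)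
    assume "\<not> \<psi> y < 1"
    hence \<psi>y: "\<psi> y = 1" using rI(4)[OF y] by simp
    have "G\<psi> y \<le> 0"
      by (rule maxp[of 0 y L \<psi> \<psi>1]) (use y d\<psi> rI \<psi>y in auto)
    moreover have "G\<psi> y = b * \<phi> y" using \<psi>y by (simp add: G\<psi>_def)
    moreover have "b * \<phi> y > 0" using bpos \<phi>pos[OF y] by simp
    ultimately show False by linarith
  qed
  have A: "\<forall>x\<in>{0<..<L}.
        (\<phi> has_real_derivative \<phi>1 x) (at x) \<and> (\<phi>1 has_real_derivative G\<phi> x) (at x) \<and>
        (\<psi> has_real_derivative \<psi>1 x) (at x) \<and> (\<psi>1 has_real_derivative G\<psi> x) (at x) \<and>
        - G\<phi> x = \<phi> x * (1 - \<phi> x - a * \<psi> x) \<and>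
        - G\<psi> x = \<psi> x * (1 - b * \<phi> x - \<psi> x)"
  proof
    fix x assume x: "x \<in> {0<..<L}"
    hence x': "0 < x" "x < L" by auto
    have "- G\<psi> x = \<psi> x * (1 - b * \<phi> x - \<psi> x)" by (simp add: G\<psi>_def algebra_simps)
    thus "(\<phi> has_real_derivative \<phi>1 x) (at x) \<and> (\<phi>1 has_real_derivative G\<phi> x) (at x) \<and>
        (\<psi> has_real_derivative \<psi>1 x) (at x) \<and> (\<psi>1 has_real_derivative G\<psi> x) (at x) \<and>
        - G\<phi> x = \<phi> x * (1 - \<phi> x - a * \<psi> x) \<and>
        - G\<psi> x = \<psi> x * (1 - b * \<phi> x - \<psi> x)"
      using d\<phi>[OF x'] d\<psi>[OF x'] by (simp add: G\<phi>_def)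
  qed
  have B: "\<forall>x\<in>{0<..<L}. 0 < \<phi> x \<and> \<phi> x < 1 \<and> 0 < \<psi> x \<and> \<psi> x < 1"
    using \<phi>pos \<phi>lt \<psi>pos \<psi>lt by auto
  have "barrier L a b \<phi> \<psi>"
    unfolding barrier_def using contL bdL A B by blast
  thus ?thesis by blast
qed

end
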